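(* For any random variable $\tilde v$ with $\mathbb{P}(\tilde v=v_n)=p_n$, $n=1,\dots,N$ ($N\in\mathbb{N}\cup\{\infty\}$, $v_n$ increasing, $p_n\in(0,1)$, $\sum_np_n=1$), there exists a family of random variables $(\tilde v^\delta)_{\delta>0}$, each taking values in $\{v_1,\dots,v_N\}$, such that (i) for each $\delta>0$ there is a strictly increasing sequence $(a^\delta_n)_{n=1}^{N+1}\subset\delta\mathbb{Z}\cup\{\pm\infty\}$ with $a^\delta_1=-\infty$, $a^\delta_{N+1}=\infty$, $\bigcup_{n=1}^N[a^\delta_n,a^\delta_{n+1})=\delta\mathbb{Z}\cup\{-\infty\}$, $\mathbb{P}(\tilde v^\delta=v_n)=\mathbb{P}^\delta(Z^\delta_1\in[a^\delta_n,a^\delta_{n+1}))$ for all $n$, and $(a^\delta_n+a^\delta_{n+1}-\delta)/2\notin\delta\mathbb{Z}$ for all $n$; (ii) $\tilde v^\delta\to\tilde v$ in law as $\delta\downarrow0$.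
   Context: For $\delta>0$, $\beta^\delta=(2\delta^2)^{-1}$ and $\mathbb{P}^\delta$ is a measure under which $Z^\delta$ is $\delta$ times the difference of two independent Poisson processes of intensity $\beta^\delta$, started at $0$. *)

theory Defs
  imports "HOL-Probability.Probability" "HOL-Library.Extended_Nat"
begin

definition beta_d :: "real \<Rightarrow> real" where
  "beta_d \<delta> = 1 / (2 * \<delta>\<^sup>2)"

text \<open>Law of Z^delta_1 under P^delta: delta times the difference of two independent
  Poisson(beta^delta) variables (the time-1 values of the two Poisson processes).\<close>
definition Z1_law :: "real \<Rightarrow> real pmf" where
  "Z1_law \<delta> = map_pmf (\<lambda>(j, k). \<delta> * (real j - real k))
      (pair_pmf (poisson_pmf (beta_d \<delta>)) (poisson_pmf (beta_d \<delta>)))"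

definition dZ :: "real \<Rightarrow> ereal set" where
  "dZ \<delta> = {ereal (\<delta> * real_of_int k) | k. True}"

definition conv_law :: "('i \<Rightarrow> real measure) \<Rightarrow> real measure \<Rightarrow> 'i filter \<Rightarrow> bool" where
  "conv_law \<mu> \<nu> F \<longleftrightarrow>
     (\<forall>f :: real \<Rightarrow> real. continuous_on UNIV f \<and> bounded (range f) \<longrightarrow>
        ((\<lambda>t. integral\<^sup>L (\<mu> t) f) \<longlongrightarrow> integral\<^sup>L \<nu> f) F)"

end

theory Submission
  imports Defs
begin


definition ppo :: "real \<Rightarrow> nat \<Rightarrow> real" where
  "ppo l k = l ^ k / fact k * exp (-l)"

lemma ppo_Suc: "ppo l (Suc k) = ppo l k * (l / (Suc k))"
  by (simp add: ppo_def field_simps)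

lemma ppo_nonneg: "0 \<le> l \<Longrightarrow> 0 \<le> ppo l k"
  by (simp add: ppo_def)

lemma ppo_up:
  assumes l: "0 < l" and k: "real k \<le> l" and s: "real s \<le> l"
  shows "i \<le> s \<Longrightarrow> ppo l k * (1 - s / l) ^ i \<le> ppo l (k + i)"
proof (induction i)
  case 0 then show ?case by simp
next
  case (Suc i)
  have x0: "0 \<le> 1 - s / l" using s l by (simp add: field_simps)
  have r: "1 - s / l \<le> l / (Suc (k + i))"
  proof -
    have "real (Suc (k+i)) \<le> l + s" using k Suc.prems by simp
    have "1 - s / l = (l - s) / l" using l by (simp add: field_simps)
    also have "\<dots> \<le> l / (l + s)"
    proof -
      have "(l - s) * (l + s) \<le> l * l" by (simp add: algebra_simps)
      then show ?thesis using l by (simp add: divide_simps)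
    qed
    also have "\<dots> \<le> l / (Suc (k + i))"
      using l \<open>real (Suc (k+i)) \<le> l + s\<close> by (intro divide_left_mono) auto
    finally show ?thesis .
  qed
  have "ppo l k * (1 - s / l) ^ Suc i = (ppo l k * (1 - s / l) ^ i) * (1 - s/l)" by simp
  also have "\<dots> \<le> ppo l (k + i) * (1 - s/l)"
    using Suc x0 by (intro mult_right_mono) auto
  also have "\<dots> \<le> ppo l (k + i) * (l / (Suc (k + i)))"
    using r ppo_nonneg[of l "k+i"] l by (intro mult_left_mono) auto
  also have "\<dots> = ppo l (k + Suc i)" by (simp add: ppo_Suc)
  finally show ?case .
qed

lemma ppo_down:
  assumes l: "0 < l" and k: "l \<le> real k" and s: "real s \<le> l"
  shows "i \<le> s \<Longrightarrow> ppo l k * (1 - s / l) ^ i \<le> ppo l (k - i)"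
proof (induction i)
  case 0 then show ?case by simp
next
  case (Suc i)
  have x0: "0 \<le> 1 - s / l" using s l by (simp add: field_simps)
  have ki: "k - i = Suc (k - Suc i)" using Suc.prems k s by linarith
  have r: "1 - s / l \<le> (k - i) / l"
  proof -
    have "l - s \<le> real (k - i)" using k Suc.prems s by linarith
    then have "l * l \<le> l * (s + (k - i))" using l by (intro mult_left_mono) auto
    then show ?thesis using l by (simp add: field_simps distrib_left)
  qed
  have "ppo l k * (1 - s / l) ^ Suc i = (ppo l k * (1 - s / l) ^ i) * (1 - s/l)" by simp
  also have "\<dots> \<le> ppo l (k - i) * (1 - s/l)"
    using Suc x0 by (intro mult_right_mono) auto
  also have "\<dots> \<le> ppo l (k - i) * ((k - i) / l)"
    using r ppo_nonneg[of l "k-i"] l by (intro mult_left_mono) auto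
  also have "\<dots> = ppo l (k - Suc i)"
  proof -
    have e: "ppo l (k - i) = ppo l (k - Suc i) * (l / Suc (k - Suc i))"
      by (subst ki, rule ppo_Suc)
    have "real (k - i) = real (Suc (k - Suc i))" using ki by simp
    then show ?thesis using l by (simp add: e field_simps)
  qed
  finally show ?case .
qed

lemma ppo_sum_le1:
  assumes "finite S" "0 < l" shows "sum (ppo l) S \<le> 1"
proof -
  have "sum (ppo l) S = sum (pmf (poisson_pmf l)) S"
    using assms by (intro sum.cong) (auto simp: ppo_def)
  also have "\<dots> = measure_pmf.prob (poisson_pmf l) S"
    using assms by (simp add: measure_measure_pmf_finite)
  also have "\<dots> \<le> 1" by (rule measure_pmf.prob_le_1)
  finally show ?thesis .
qed

lemma ppo_max:
  assumes l: "0 < l" and s: "real s ^ 2 \<le> l / 2"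
  shows "ppo l k \<le> 2 / (real s + 1)"
proof -
  have sl: "real s \<le> l"
  proof (cases "s = 0")
    case True then show ?thesis using l by simp
  next
    case False
    then have "real s \<le> real s ^ 2" by (simp add: power2_eq_square)
    then show ?thesis using s l by linarith
  qed
  define x where "x = 1 - real s / l"
  have x0: "0 \<le> x" and x1: "x \<le> 1" using sl l by (auto simp: x_def field_simps)
  have half: "1 / 2 \<le> x ^ i" if "i \<le> s" for i
  proof -
    have "1 + real s * (- (real s / l)) \<le> (1 + (- (real s / l))) ^ s"
      by (rule Bernoulli_inequality) (use sl l in \<open>simp add: field_simps\<close>)
    moreover have "1 / 2 \<le> 1 + real s * (- (real s / l))"
      using s l by (simp add: field_simps power2_eq_square)
    moreover have "x ^ s \<le> x ^ i" using that x0 x1 by (rule_tac power_decreasing) auto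
    ultimately show ?thesis by (simp add: x_def)
  qed
  have p0: "0 \<le> ppo l k" using l by (simp add: ppo_nonneg)
  have key: "ppo l k / 2 \<le> ppo l j" if jf: "j \<in> f ` {..s}" and fi: "\<And>i. i \<le> s \<Longrightarrow> ppo l k * x ^ i \<le> ppo l (f i)" for j f
  proof -
    obtain i where i: "i \<le> s" "j = f i" using jf by auto
    have "ppo l k / 2 = ppo l k * (1/2)" by simp
    also have "\<dots> \<le> ppo l k * x ^ i" using half[OF i(1)] p0 by (intro mult_left_mono) auto
    also have "\<dots> \<le> ppo l j" using fi[OF i(1)] i by simp
    finally show ?thesis .
  qed
  obtain f where f: "inj_on f {..s}" "\<And>i. i \<le> s \<Longrightarrow> ppo l k * x ^ i \<le> ppo l (f i)"
  proof (cases "real k \<le> l")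
    case True
    show ?thesis
      by (rule that[of "\<lambda>i. k + i"]) (auto simp: inj_on_def x_def intro!: ppo_up True sl l)
  next
    case False
    then have ks: "s \<le> k" using sl by linarith
    show ?thesis
      by (rule that[of "\<lambda>i. k - i"]) (use ks False in \<open>auto simp: inj_on_def x_def intro!: ppo_down sl l\<close>)
  qed
  have "(real s + 1) * (ppo l k / 2) = (\<Sum>j\<in>f ` {..s}. ppo l k / 2)"
    using f(1) by (simp add: card_image)
  also have "\<dots> \<le> sum (ppo l) (f ` {..s})"
    by (rule sum_mono) (rule key, auto intro: f(2))
  also have "\<dots> \<le> 1" using l by (intro ppo_sum_le1) auto
  finally show ?thesis by (simp add: field_simps)
qed

lemma pois_atom:
  assumes d: "0 < \<delta>"
  shows "pmf (poisson_pmf (beta_d \<delta>)) m \<le> 4 * \<delta>"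
proof -
  have b: "0 < beta_d \<delta>" using d by (simp add: beta_d_def)
  define s where "s = nat \<lfloor>1 / (2 * \<delta>)\<rfloor>"
  have s1: "real s \<le> 1 / (2 * \<delta>)" using d by (simp add: s_def)
  have s2: "1 / (2 * \<delta>) < real s + 1" using d unfolding s_def by linarith
  have "real s ^ 2 \<le> (1 / (2 * \<delta>)) ^ 2" using s1 by (intro power_mono) auto
  also have "\<dots> = beta_d \<delta> / 2" by (simp add: beta_d_def power2_eq_square field_simps)
  finally have "ppo (beta_d \<delta>) m \<le> 2 / (real s + 1)" using b by (intro ppo_max) auto
  also have "\<dots> \<le> 4 * \<delta>"
  proof -
    have "1 \<le> 2 * \<delta> * (real s + 1)" using s2 d by (simp add: field_simps)
    then show ?thesis using d by (simp add: field_simps)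
  qed
  finally show ?thesis using b by (simp add: ppo_def)
qed

definition Wl :: "real \<Rightarrow> int pmf" where
  "Wl \<delta> = map_pmf (\<lambda>(j, k). int j - int k)
      (pair_pmf (poisson_pmf (beta_d \<delta>)) (poisson_pmf (beta_d \<delta>)))"

lemma Z1_Wl: "Z1_law \<delta> = map_pmf (\<lambda>w. \<delta> * of_int w) (Wl \<delta>)"
  unfolding Z1_law_def Wl_def map_pmf_comp by (intro map_pmf_cong) auto

lemma Wl_atom:
  assumes d: "0 < \<delta>"
  shows "pmf (Wl \<delta>) w \<le> 4 * \<delta>"
proof -
  define A where "A = poisson_pmf (beta_d \<delta>)"
  have eq: "Wl \<delta> = bind_pmf A (\<lambda>j. map_pmf (\<lambda>k. int j - int k) A)"
    unfolding Wl_def A_def pair_pmf_def map_bind_pmf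
    by (simp add: map_bind_pmf bind_return_pmf map_pmf_def)
  have each: "pmf (map_pmf (\<lambda>k. int j - int k) A) w \<le> 4 * \<delta>" for j
  proof -
    have "pmf (map_pmf (\<lambda>k. int j - int k) A) w = measure A ((\<lambda>k. int j - int k) -` {w})"
      by (rule pmf_map)
    also have "\<dots> \<le> measure A {nat (int j - w)}"
      by (intro measure_pmf.finite_measure_mono) auto
    also have "\<dots> = pmf A (nat (int j - w))" by (simp add: measure_pmf_single)
    also have "\<dots> \<le> 4 * \<delta>" unfolding A_def by (rule pois_atom[OF d])
    finally show ?thesis .
  qed
  have "ennreal (pmf (Wl \<delta>) w) = (\<integral>\<^sup>+j. pmf (map_pmf (\<lambda>k. int j - int k) A) w \<partial>measure_pmf A)"
    unfolding eq by (rule ennreal_pmf_bind)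
  also have "\<dots> \<le> (\<integral>\<^sup>+j. ennreal (4 * \<delta>) \<partial>measure_pmf A)"
    by (intro nn_integral_mono ennreal_leI each)
  also have "\<dots> = ennreal (4 * \<delta>)" by (simp add: measure_pmf.emeasure_space_1)
  finally show ?thesis using d by simp
qed

lemma Wl_interval:
  assumes d: "0 < \<delta>" and AB: "A \<le> B"
  shows "measure_pmf.prob (Wl \<delta>) {w. A \<le> w \<and> w < B} \<le> real_of_int (B - A) * (4 * \<delta>)"
proof -
  have "{w. A \<le> w \<and> w < B} = {A..<B}" by auto
  then have "measure_pmf.prob (Wl \<delta>) {w. A \<le> w \<and> w < B} = sum (pmf (Wl \<delta>)) {A..<B}"
    by (simp add: measure_measure_pmf_finite)
  also have "\<dots> \<le> sum (\<lambda>_. 4 * \<delta>) {A..<B}"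
    by (intro sum_mono Wl_atom d)
  also have "\<dots> = real_of_int (B - A) * (4 * \<delta>)" using AB by simp
  finally show ?thesis .
qed



definition G :: "real \<Rightarrow> int \<Rightarrow> real" where
  "G \<delta> t = measure_pmf.prob (Wl \<delta>) {w. w < t}"

lemma G_mono: "s \<le> t \<Longrightarrow> G \<delta> s \<le> G \<delta> t"
  unfolding G_def by (intro measure_pmf.finite_measure_mono) auto

lemma G_diff:
  assumes "s \<le> t"
  shows "G \<delta> t = G \<delta> s + measure_pmf.prob (Wl \<delta>) {w. s \<le> w \<and> w < t}"
proof -
  have "{w. w < t} = {w. w < s} \<union> {w. s \<le> w \<and> w < t}" using assms by auto
  moreover have "measure_pmf.prob (Wl \<delta>) ({w. w < s} \<union> {w. s \<le> w \<and> w < t}) =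
     measure_pmf.prob (Wl \<delta>) {w. w < s} + measure_pmf.prob (Wl \<delta>) {w. s \<le> w \<and> w < t}"
    by (rule measure_pmf.finite_measure_Union) auto
  ultimately show ?thesis unfolding G_def by simp
qed

lemma G_high: "c < 1 \<Longrightarrow> \<exists>t. c \<le> G \<delta> t"
proof -
  assume c: "c < 1"
  have "(\<lambda>n. measure_pmf.prob (Wl \<delta>) {w. w < int n}) \<longlonglongrightarrow> measure_pmf.prob (Wl \<delta>) (\<Union>n. {w. w < int n})"
    by (intro measure_pmf.finite_Lim_measure_incseq) (auto simp: incseq_def)
  moreover have "(\<Union>n. {w. w < int n}) = UNIV"
  proof -
    have "w \<in> (\<Union>n. {w. w < int n})" for w :: int
      by (rule UN_I[of "Suc (nat w)"]) auto
    then show ?thesis by auto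
  qed
  ultimately have "(\<lambda>n. G \<delta> (int n)) \<longlonglongrightarrow> measure_pmf.prob (Wl \<delta>) UNIV" unfolding G_def by simp
  then have "(\<lambda>n. G \<delta> (int n)) \<longlonglongrightarrow> 1" using measure_pmf.prob_space[of "Wl \<delta>"] by simp
  then have "\<forall>\<^sub>F n in sequentially. c < G \<delta> (int n)" using c by (rule order_tendstoD)
  then obtain N where "\<forall>n\<ge>N. c < G \<delta> (int n)" unfolding eventually_sequentially by blast
  then have "c < G \<delta> (int N)" by simp
  then show ?thesis by (intro exI[of _ "int N"]) simp
qed

lemma G_low: "0 < c \<Longrightarrow> \<exists>t. G \<delta> t < c"
proof -
  assume c: "0 < c"
  have "(\<lambda>n. measure_pmf.prob (Wl \<delta>) {w. w < - int n}) \<longlonglongrightarrow> measure_pmf.prob (Wl \<delta>) (\<Inter>n. {w. w < - int n})"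
    by (intro measure_pmf.finite_Lim_measure_decseq) (auto simp: decseq_def)
  moreover have "(\<Inter>n. {w. w < - int n}) = {}"
  proof -
    have "w \<notin> (\<Inter>n. {w. w < - int n})" for w :: int
      by (auto intro!: exI[of _ "nat (- w)"] split: if_splits)
    then show ?thesis by auto
  qed
  ultimately have "(\<lambda>n. G \<delta> (- int n)) \<longlonglongrightarrow> measure_pmf.prob (Wl \<delta>) {}" unfolding G_def by simp
  then have "(\<lambda>n. G \<delta> (- int n)) \<longlonglongrightarrow> 0" by simp
  then have "\<forall>\<^sub>F n in sequentially. G \<delta> (- int n) < c" using c by (rule order_tendstoD)
  then obtain N where "\<forall>n\<ge>N. G \<delta> (- int n) < c" unfolding eventually_sequentially by blast
  then have "G \<delta> (- int N) < c" by simp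
  then show ?thesis by blast
qed

definition kk :: "real \<Rightarrow> real \<Rightarrow> int" where
  "kk \<delta> c = Inf {k. c \<le> G \<delta> (2 * k)}"

lemma kk_props:
  assumes "0 < c" "c < 1"
  shows "c \<le> G \<delta> (2 * kk \<delta> c)" "G \<delta> (2 * kk \<delta> c - 2) < c"
    "bdd_below {k. c \<le> G \<delta> (2 * k)}" "{k. c \<le> G \<delta> (2 * k)} \<noteq> {}"
proof -
  define S where "S = {k. c \<le> G \<delta> (2 * k)}"
  obtain t1 where t1: "c \<le> G \<delta> t1" using G_high assms by blast
  obtain t0 where t0: "G \<delta> t0 < c" using G_low assms by blast
  have "t1 \<le> 2 * \<bar>t1\<bar>" by (simp add: abs_if)
  then have "\<bar>t1\<bar> \<in> S" unfolding S_def using t1 G_mono[of t1 "2 * \<bar>t1\<bar>" \<delta>] by auto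
  then have ne: "S \<noteq> {}" by auto
  have lb: "- \<bar>t0\<bar> \<le> k" if "k \<in> S" for k
  proof (rule ccontr)
    assume "\<not> - \<bar>t0\<bar> \<le> k"
    then have "2 * k \<le> t0" by linarith
    then have "G \<delta> (2*k) \<le> G \<delta> t0" by (rule G_mono)
    then show False using that t0 unfolding S_def by auto
  qed
  then show bdd: "bdd_below {k. c \<le> G \<delta> (2 * k)}" unfolding S_def[symmetric] bdd_below_def by blast
  show "{k. c \<le> G \<delta> (2 * k)} \<noteq> {}" using ne by (simp add: S_def)
  define z where "z = - \<bar>t0\<bar> + int (LEAST n. - \<bar>t0\<bar> + int n \<in> S)"
  have ex: "\<exists>n. - \<bar>t0\<bar> + int n \<in> S"
  proof -
    obtain k where "k \<in> S" using ne by auto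
    then show ?thesis using lb[of k] by (intro exI[of _ "nat (k + \<bar>t0\<bar>)"]) auto
  qed
  have zS: "z \<in> S" unfolding z_def using LeastI_ex[OF ex] .
  have zmin: "z \<le> k" if "k \<in> S" for k
  proof -
    have "(LEAST n. - \<bar>t0\<bar> + int n \<in> S) \<le> nat (k + \<bar>t0\<bar>)"
      by (rule Least_le) (use that lb[OF that] in auto)
    then show ?thesis using lb[OF that] unfolding z_def by linarith
  qed
  have kz: "kk \<delta> c = z" unfolding kk_def S_def[symmetric]
    by (rule cInf_eq_minimum) (use zS zmin in auto)
  show "c \<le> G \<delta> (2 * kk \<delta> c)" using zS kz by (simp add: S_def)
  show "G \<delta> (2 * kk \<delta> c - 2) < c"
  proof (rule ccontr)
    assume "\<not> G \<delta> (2 * kk \<delta> c - 2) < c"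
    then have "z - 1 \<in> S" using kz by (simp add: S_def algebra_simps)
    then show False using zmin by fastforce
  qed
qed

lemma kk_mono:
  assumes "0 < c" "c < 1" "0 < c'" "c' < 1" "c \<le> c'"
  shows "kk \<delta> c \<le> kk \<delta> c'"
  unfolding kk_def
  by (rule cInf_superset_mono) (use kk_props[OF assms(3,4)] kk_props[OF assms(1,2)] assms(5) in auto)



locale lsetup =
  fixes N :: enat and v :: "nat \<Rightarrow> real" and p :: "nat \<Rightarrow> real"
  assumes N2: "N \<ge> 2"
    and vmono: "strict_mono_on {n. 1 \<le> n \<and> enat n \<le> N} v"
    and ppos: "\<And>n. 1 \<le> n \<Longrightarrow> enat n \<le> N \<Longrightarrow> 0 < p n"
    and psum: "(p has_sum 1) {n. 1 \<le> n \<and> enat n \<le> N}"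
begin

definition II :: "nat set" where "II = {n. 1 \<le> n \<and> enat n \<le> N}"

definition pf :: "nat \<Rightarrow> real" where "pf n = (if n \<in> II then p n else 0)"

lemma pf_nonneg: "0 \<le> pf n"
  using ppos by (auto simp: pf_def II_def less_imp_le)

lemma pf_nn: "(\<integral>\<^sup>+n. ennreal (pf n) \<partial>count_space UNIV) = 1"
proof -
  have "(\<integral>\<^sup>+n. ennreal (pf n) \<partial>count_space UNIV) = (\<integral>\<^sup>+n. ennreal (p n) \<partial>count_space II)"
    by (subst nn_integral_count_space_indicator) (auto simp: pf_def intro!: nn_integral_cong split: split_indicator)
  also have "\<dots> = ennreal (infsetsum p II)"
  proof (rule nn_integral_conv_infsetsum)
    have "p summable_on II" using psum unfolding II_def by (rule has_sum_imp_summable)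
    then have "(\<lambda>x. norm (p x)) summable_on II"
      by (subst summable_on_cong[where g = p]) (auto simp: II_def intro!: abs_of_pos ppos)
    then show "Infinite_Set_Sum.abs_summable_on p II" using abs_summable_equivalent by blast
    show "\<And>x. x \<in> II \<Longrightarrow> 0 \<le> p x" using ppos by (auto simp: II_def less_imp_le)
  qed
  also have "infsetsum p II = infsum p II"
  proof (rule infsetsum_infsum)
    have "p summable_on II" using psum unfolding II_def by (rule has_sum_imp_summable)
    then have "(\<lambda>x. norm (p x)) summable_on II"
      by (subst summable_on_cong[where g = p]) (auto simp: II_def intro!: abs_of_pos ppos)
    then show "Infinite_Set_Sum.abs_summable_on p II" using abs_summable_equivalent by blast
  qed
  also have "infsum p II = 1" using psum unfolding II_def by (rule infsumI)
  finally show ?thesis by simp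
qed

definition Pidx :: "nat pmf" where "Pidx = embed_pmf pf"

lemma pmf_Pidx: "pmf Pidx n = pf n"
  unfolding Pidx_def by (rule pmf_embed_pmf) (use pf_nonneg pf_nn in auto)

lemma set_Pidx: "set_pmf Pidx \<subseteq> II"
  by (auto simp: set_pmf_iff pmf_Pidx pf_def split: if_splits)

definition c :: "nat \<Rightarrow> real" where "c n = measure_pmf.prob Pidx {..<n}"

lemma c_sum: "c n = (\<Sum>m<n. pf m)"
  by (simp add: c_def measure_measure_pmf_finite pmf_Pidx)

lemma c_Suc: "c (Suc n) = c n + pf n"
  by (simp add: c_sum)

lemma c_1: "c 1 = 0"
  by (simp add: c_sum pf_def II_def)

lemma c_mono: "m \<le> n \<Longrightarrow> c m \<le> c n"
  unfolding c_def by (intro measure_pmf.finite_measure_mono) auto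

lemma c_le1: "c n \<le> 1"
  unfolding c_def by (rule measure_pmf.prob_le_1)

lemma c_pos: "2 \<le> n \<Longrightarrow> 0 < c n"
proof -
  assume n: "2 \<le> n"
  have "enat 1 \<le> 2" unfolding numeral_eq_enat by simp
  then have "enat 1 \<le> N" using N2 by (rule order_trans)
  then have "1 \<in> II" by (auto simp: II_def)
  then have "0 < pf 1" using ppos by (auto simp: pf_def II_def)
  also have "pf 1 \<le> (\<Sum>m<n. pf m)" using n pf_nonneg by (intro member_le_sum) auto
  finally show ?thesis by (simp add: c_sum)
qed

lemma c_lt1: "n \<in> II \<Longrightarrow> c n < 1"
proof -
  assume n: "n \<in> II"
  have "c n + pf n \<le> 1" using c_le1[of "Suc n"] by (simp add: c_Suc)
  moreover have "0 < pf n" using n ppos by (auto simp: pf_def II_def)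
  ultimately show ?thesis by simp
qed

lemma c_last: "N \<noteq> \<infinity> \<Longrightarrow> c (the_enat N + 1) = 1"
proof -
  assume "N \<noteq> \<infinity>"
  then obtain K where K: "N = enat K" by auto
  have "x < K + 1" if "x \<in> II" for x
    using that unfolding II_def by (simp add: K)
  then have "measure_pmf.prob Pidx (UNIV - {..<K+1}) = 0"
    using set_Pidx by (subst measure_pmf_zero_iff) auto
  then have "1 - c (K + 1) = 0"
    unfolding c_def using measure_pmf.prob_compl[of "{..<K+1}" Pidx] by simp
  then show ?thesis using K by simp
qed

end


lemma enat_le_Suc_cases:
  fixes N :: enat
  assumes "enat n \<le> N + 1"
  shows "enat n \<le> N \<or> (N \<noteq> \<infinity> \<and> n = the_enat N + 1)"
  using assms by (cases N) (auto simp: one_enat_def)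

context lsetup
begin

lemma two_II: "2 \<in> II"
  using N2 by (auto simp: II_def numeral_eq_enat)

lemma one_II: "1 \<in> II"
  using N2 by (auto simp: II_def numeral_eq_enat one_enat_def intro: order_trans[rotated])

definition K :: "real \<Rightarrow> nat \<Rightarrow> int" where
  "K \<delta> n = kk \<delta> (c n) + int n"

definition a :: "real \<Rightarrow> nat \<Rightarrow> ereal" where
  "a \<delta> n = (if n \<le> 1 then -\<infinity> else if enat n \<le> N then ereal (2 * \<delta> * real_of_int (K \<delta> n)) else \<infinity>)"

lemma K_mono:
  assumes "2 \<le> m" "m < n" "n \<in> II"
  shows "K \<delta> m < K \<delta> n"
proof -
  have mII: "m \<in> II" using assms unfolding II_def by (auto intro: order_trans[rotated])
  have "kk \<delta> (c m) \<le> kk \<delta> (c n)"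
    using assms mII by (intro kk_mono c_pos c_lt1 c_mono) auto
  then show ?thesis using assms unfolding K_def by simp
qed

lemma K_lower:
  assumes "2 \<le> n" "n \<in> II"
  shows "kk \<delta> (c 2) + int n \<le> K \<delta> n"
proof -
  have "kk \<delta> (c 2) \<le> kk \<delta> (c n)"
    using assms two_II by (intro kk_mono c_pos c_lt1 c_mono) auto
  then show ?thesis unfolding K_def by simp
qed

lemma a_strict:
  assumes d: "0 < \<delta>"
  shows "strict_mono_on {n. 1 \<le> n \<and> enat n \<le> N + 1} (a \<delta>)"
proof (rule strict_mono_onI)
  fix m n assume m: "m \<in> {n. 1 \<le> n \<and> enat n \<le> N + 1}" and n: "n \<in> {n. 1 \<le> n \<and> enat n \<le> N + 1}" and mn: "m < n"
  show "a \<delta> m < a \<delta> n"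
  proof (cases "m = 1")
    case True
    then show ?thesis using mn by (auto simp: a_def)
  next
    case False
    then have m2: "2 \<le> m" using m by auto
    have mN: "enat m \<le> N"
    proof -
      have "enat m < enat n" using mn by simp
      also have "enat n \<le> N + 1" using n by simp
      finally show ?thesis by (cases N) (auto simp: one_enat_def)
    qed
    show ?thesis
    proof (cases "enat n \<le> N")
      case True
      then have "K \<delta> m < K \<delta> n" using m2 mn by (intro K_mono) (auto simp: II_def)
      then show ?thesis using m2 mn mN True d by (auto simp: a_def)
    next
      case False
      then show ?thesis using m2 mn mN by (auto simp: a_def)
    qed
  qed
qed

lemma a_mono:
  assumes d: "0 < \<delta>" and "1 \<le> m" "m \<le> n" "enat n \<le> N + 1"
  shows "a \<delta> m \<le> a \<delta> n"
proof -
  have "enat m \<le> N + 1" using assms by (meson enat_ord_simps(1) order_trans)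
  then show ?thesis
    using strict_mono_on_leD[OF a_strict[OF d], of m n] assms by auto
qed

lemma a_1: "a \<delta> 1 = -\<infinity>" by (simp add: a_def)

lemma a_last: "N \<noteq> \<infinity> \<Longrightarrow> a \<delta> (the_enat N + 1) = \<infinity>"
proof -
  assume "N \<noteq> \<infinity>"
  then obtain K0 where K0: "N = enat K0" by auto
  have "\<not> enat (the_enat N + 1) \<le> N" "\<not> the_enat N + 1 \<le> 1"
    using N2 unfolding K0 by (auto simp: numeral_eq_enat)
  then show ?thesis unfolding a_def by simp
qed

lemma a_fin: "2 \<le> n \<Longrightarrow> n \<in> II \<Longrightarrow> a \<delta> n = ereal (2 * \<delta> * real_of_int (K \<delta> n))"
  by (auto simp: a_def II_def)

lemma partition_ex:
  assumes d: "0 < \<delta>"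
  shows "\<exists>n\<in>II. a \<delta> n \<le> ereal x \<and> ereal x < a \<delta> (Suc n)"
proof -
  define S where "S = {n\<in>II. a \<delta> n \<le> ereal x}"
  define B where "B = nat \<lceil>x / (2 * \<delta>) - real_of_int (kk \<delta> (c 2))\<rceil>"
  have 1: "1 \<in> S" using one_II by (simp add: S_def a_def)
  have "S \<subseteq> {..max 1 B}"
  proof
    fix n assume n: "n \<in> S"
    show "n \<in> {..max 1 B}"
    proof (cases "n \<le> 1")
      case True then show ?thesis by auto
    next
      case False
      then have n2: "2 \<le> n" by simp
      have nII: "n \<in> II" using n by (simp add: S_def)
      have "2 * \<delta> * real_of_int (K \<delta> n) \<le> x" using n a_fin[OF n2 nII] by (simp add: S_def)
      then have "real_of_int (K \<delta> n) \<le> x / (2 * \<delta>)" using d by (simp add: field_simps)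
      moreover have "real_of_int (kk \<delta> (c 2)) + real n \<le> real_of_int (K \<delta> n)"
        using K_lower[OF n2 nII, of \<delta>] by linarith
      ultimately have "real n \<le> x / (2 * \<delta>) - real_of_int (kk \<delta> (c 2))" by linarith
      then have "n \<le> B" unfolding B_def by linarith
      then show ?thesis by auto
    qed
  qed
  then have fin: "finite S" by (rule finite_subset) auto
  define n0 where "n0 = Max S"
  have n0S: "n0 \<in> S" unfolding n0_def using fin 1 by (intro Max_in) auto
  have n0max: "m \<le> n0" if "m \<in> S" for m unfolding n0_def using fin that by (rule Max_ge)
  have n0II: "n0 \<in> II" using n0S by (simp add: S_def)
  have "ereal x < a \<delta> (Suc n0)"
  proof (cases "Suc n0 \<in> II")
    case True
    then have "Suc n0 \<notin> S" using n0max by fastforce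
    then show ?thesis using True by (auto simp: S_def)
  next
    case False
    then have "\<not> enat (Suc n0) \<le> N" by (simp add: II_def)
    then show ?thesis using n0II by (auto simp: a_def II_def)
  qed
  then show ?thesis using n0S n0II by (auto simp: S_def)
qed

lemma partition_uniq:
  assumes d: "0 < \<delta>"
    and n1: "n1 \<in> II" "a \<delta> n1 \<le> x" "x < a \<delta> (Suc n1)"
    and n2: "n2 \<in> II" "a \<delta> n2 \<le> x" "x < a \<delta> (Suc n2)"
  shows "n1 = n2"
proof (rule ccontr)
  have le: False if "m1 \<in> II" "x < a \<delta> (Suc m1)" "m2 \<in> II" "a \<delta> m2 \<le> x" "m1 < m2" for m1 m2
  proof -
    have "a \<delta> (Suc m1) \<le> a \<delta> m2"
      using that by (intro a_mono[OF d]) (auto simp: II_def intro: order_trans)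
    then show False using that by auto
  qed
  assume "n1 \<noteq> n2"
  then have "n1 < n2 \<or> n2 < n1" by auto
  then show False using le n1 n2 by metis
qed

definition phi :: "real \<Rightarrow> real \<Rightarrow> nat" where
  "phi \<delta> x = (THE n. n \<in> II \<and> a \<delta> n \<le> ereal x \<and> ereal x < a \<delta> (Suc n))"

lemma phi:
  assumes d: "0 < \<delta>"
  shows "phi \<delta> x \<in> II \<and> a \<delta> (phi \<delta> x) \<le> ereal x \<and> ereal x < a \<delta> (Suc (phi \<delta> x))"
proof -
  obtain n where n: "n \<in> II" "a \<delta> n \<le> ereal x" "ereal x < a \<delta> (Suc n)"
    using partition_ex[OF d] by blast
  have "phi \<delta> x = n" unfolding phi_def
    by (rule the_equality) (use n partition_uniq[OF d] in blast)+
  then show ?thesis using n by simp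
qed

lemma phi_iff:
  assumes d: "0 < \<delta>"
  shows "phi \<delta> x = n \<longleftrightarrow> (n \<in> II \<and> a \<delta> n \<le> ereal x \<and> ereal x < a \<delta> (Suc n))"
  using phi[OF d, of x] partition_uniq[OF d] by blast

end


lemma enat_Suc_le: "enat n \<le> N \<Longrightarrow> enat (Suc n) \<le> N + 1"
  by (cases N) (auto simp: one_enat_def)

context lsetup
begin

definition H :: "real \<Rightarrow> nat \<Rightarrow> real" where
  "H \<delta> m = measure_pmf.prob (Z1_law \<delta>) {x. ereal x < a \<delta> m}"

lemma H_fin:
  assumes d: "0 < \<delta>"
  shows "measure_pmf.prob (Z1_law \<delta>) {x. ereal x < ereal (2 * \<delta> * real_of_int k)} = G \<delta> (2 * k)"
proof -
  have "(\<lambda>w. \<delta> * real_of_int w) -` {x. ereal x < ereal (2 * \<delta> * real_of_int k)} = {w. w < 2 * k}"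
  proof -
    have "\<delta> * real_of_int w < 2 * \<delta> * real_of_int k \<longleftrightarrow> w < 2 * k" for w
    proof -
      have "\<delta> * real_of_int w < 2 * \<delta> * real_of_int k \<longleftrightarrow> real_of_int w < real_of_int (2 * k)"
        using d by (simp add: field_simps)
      also have "\<dots> \<longleftrightarrow> w < 2 * k" by (rule of_int_less_iff)
      finally show ?thesis .
    qed
    then show ?thesis by auto
  qed
  then show ?thesis by (simp add: Z1_Wl G_def)
qed

lemma H_bounds:
  assumes d: "0 < \<delta>" and m: "1 \<le> m" "enat m \<le> N + 1"
  shows "c m \<le> H \<delta> m \<and> H \<delta> m \<le> c m + (2 * real m + 2) * (4 * \<delta>)"
proof -
  consider "m = 1" | "2 \<le> m" "enat m \<le> N" | "N \<noteq> \<infinity>" "m = the_enat N + 1" "2 \<le> m"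
    using enat_le_Suc_cases[OF m(2)] m(1) N2 by (cases "m = 1") auto
  then show ?thesis
  proof cases
    case 1
    have "c m = 0" using 1 c_1 by simp
    then show ?thesis using d 1 by (simp add: H_def a_def)
  next
    case 2
    then have mII: "m \<in> II" by (simp add: II_def)
    define k0 where "k0 = kk \<delta> (c m)"
    have cp: "0 < c m" "c m < 1" using 2 mII by (auto intro: c_pos c_lt1)
    have Hm: "H \<delta> m = G \<delta> (2 * K \<delta> m)"
      unfolding H_def a_fin[OF 2(1) mII] by (rule H_fin[OF d])
    have Km: "K \<delta> m = k0 + int m" by (simp add: K_def k0_def)
    have g1: "c m \<le> G \<delta> (2 * k0)" unfolding k0_def by (rule kk_props(1)[OF cp])
    have g2: "G \<delta> (2 * k0 - 2) < c m" unfolding k0_def by (rule kk_props(2)[OF cp])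
    have i1: "G \<delta> (2 * k0) \<le> G \<delta> (2 * K \<delta> m)" using Km by (intro G_mono) simp
    have i2: "G \<delta> (2 * K \<delta> m) = G \<delta> (2 * k0 - 2) + measure_pmf.prob (Wl \<delta>) {w. 2 * k0 - 2 \<le> w \<and> w < 2 * K \<delta> m}"
      using Km by (intro G_diff) simp
    have i3: "measure_pmf.prob (Wl \<delta>) {w. 2 * k0 - 2 \<le> w \<and> w < 2 * K \<delta> m} \<le> real_of_int (2 * K \<delta> m - (2 * k0 - 2)) * (4 * \<delta>)"
      using Km by (intro Wl_interval d) simp
    have e: "real_of_int (2 * K \<delta> m - (2 * k0 - 2)) = 2 * real m + 2" using Km by simp
    have i4: "measure_pmf.prob (Wl \<delta>) {w. 2 * k0 - 2 \<le> w \<and> w < 2 * K \<delta> m} \<le> (2 * real m + 2) * (4 * \<delta>)"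
      using i3 by (simp only: e)
    have "G \<delta> (2 * K \<delta> m) \<le> G \<delta> (2 * k0 - 2) + (2 * real m + 2) * (4 * \<delta>)"
      using i2 i4 by linarith
    then show ?thesis using g1 g2 Hm i1 by linarith
  next
    case 3
    have "H \<delta> m = 1" using 3 a_last[OF 3(1), of \<delta>] by (simp add: H_def)
    moreover have "c m = 1" using 3 c_last by simp
    ultimately show ?thesis using d by simp
  qed
qed

definition Q :: "real \<Rightarrow> nat pmf" where "Q \<delta> = map_pmf (phi \<delta>) (Z1_law \<delta>)"

lemma set_Q: "0 < \<delta> \<Longrightarrow> set_pmf (Q \<delta>) \<subseteq> II"
  using phi by (auto simp: Q_def)

lemma pmf_Q_notin: "0 < \<delta> \<Longrightarrow> n \<notin> II \<Longrightarrow> pmf (Q \<delta>) n = 0"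
proof -
  assume "0 < \<delta>" "n \<notin> II"
  then have "n \<notin> set_pmf (Q \<delta>)" using set_Q[of \<delta>] by auto
  then show ?thesis by (simp add: set_pmf_iff)
qed

lemma pmf_Q_interval:
  assumes d: "0 < \<delta>" and n: "n \<in> II"
  shows "pmf (Q \<delta>) n = measure_pmf.prob (Z1_law \<delta>) {x. a \<delta> n \<le> ereal x \<and> ereal x < a \<delta> (Suc n)}"
proof -
  have "phi \<delta> -` {n} = {x. a \<delta> n \<le> ereal x \<and> ereal x < a \<delta> (Suc n)}"
    using phi_iff[OF d] n by auto
  then show ?thesis by (simp add: Q_def pmf_map)
qed

lemma pmf_Q:
  assumes d: "0 < \<delta>" and n: "n \<in> II"
  shows "pmf (Q \<delta>) n = H \<delta> (Suc n) - H \<delta> n"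
proof -
  have le: "a \<delta> n \<le> a \<delta> (Suc n)"
    using n by (intro a_mono[OF d]) (auto simp: II_def intro: enat_Suc_le)
  have "{x. a \<delta> n \<le> ereal x \<and> ereal x < a \<delta> (Suc n)} = {x. ereal x < a \<delta> (Suc n)} - {x. ereal x < a \<delta> n}"
    using le by auto
  moreover have "{x. ereal x < a \<delta> n} \<subseteq> {x. ereal x < a \<delta> (Suc n)}" using le by auto
  ultimately show ?thesis unfolding pmf_Q_interval[OF d n] H_def
    by (simp add: measure_pmf.finite_measure_Diff)
qed

lemma Q_cdf:
  assumes d: "0 < \<delta>"
  shows "measure_pmf.prob Pidx {..M} \<le> measure_pmf.prob (Q \<delta>) {..M}"
proof (cases "enat M \<le> N")
  case True
  have eqv: "phi \<delta> x \<le> M \<longleftrightarrow> ereal x < a \<delta> (Suc M)" for x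
  proof
    assume "phi \<delta> x \<le> M"
    then have "Suc (phi \<delta> x) \<le> Suc M" by simp
    then have "a \<delta> (Suc (phi \<delta> x)) \<le> a \<delta> (Suc M)"
      using True by (intro a_mono[OF d]) (auto intro: enat_Suc_le)
    then show "ereal x < a \<delta> (Suc M)" using phi[OF d, of x] by auto
  next
    assume x: "ereal x < a \<delta> (Suc M)"
    show "phi \<delta> x \<le> M"
    proof (rule ccontr)
      assume "\<not> phi \<delta> x \<le> M"
      then have "Suc M \<le> phi \<delta> x" by simp
      moreover have "enat (phi \<delta> x) \<le> N + 1" using phi[OF d, of x]
        by (auto simp: II_def intro: order_trans)
      ultimately have "a \<delta> (Suc M) \<le> a \<delta> (phi \<delta> x)" by (intro a_mono[OF d]) auto
      then show False using phi[OF d, of x] x by auto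
    qed
  qed
  then have "phi \<delta> -` {..M} = {x. ereal x < a \<delta> (Suc M)}" by auto
  then have "measure_pmf.prob (Q \<delta>) {..M} = H \<delta> (Suc M)" by (simp add: Q_def H_def)
  moreover have "c (Suc M) \<le> H \<delta> (Suc M)"
    using H_bounds[OF d, of "Suc M"] enat_Suc_le[OF True] by auto
  moreover have "c (Suc M) = measure_pmf.prob Pidx {..M}" by (simp add: c_def lessThan_Suc_atMost)
  ultimately show ?thesis by simp
next
  case False
  have "phi \<delta> -` {..M} = UNIV"
  proof -
    have "phi \<delta> x \<le> M" for x
    proof -
      have "enat (phi \<delta> x) \<le> N" using phi[OF d, of x] by (simp add: II_def)
      then show ?thesis using False by (metis enat_ord_simps(1) le_cases order_trans)
    qed
    then show ?thesis by auto
  qed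
  then have "measure_pmf.prob (Q \<delta>) {..M} = 1" by (simp add: Q_def)
  then show ?thesis by simp
qed

lemma Q_conv: "((\<lambda>\<delta>. pmf (Q \<delta>) n) \<longlongrightarrow> pmf Pidx n) (at_right 0)"
proof (rule LIM_zero_cancel, rule Lim_null_comparison)
  define C where "C = (2 * real (Suc n) + 2 + (2 * real n + 2)) * 4"
  show "((\<lambda>\<delta>. C * \<delta>) \<longlongrightarrow> 0) (at_right 0)"
    by (auto intro!: tendsto_eq_intros)
  show "\<forall>\<^sub>F \<delta> in at_right 0. norm (pmf (Q \<delta>) n - pmf Pidx n) \<le> C * \<delta>"
    using eventually_at_right_less[of "0::real"]
  proof eventually_elim
    case (elim \<delta>)
    then have d: "0 < \<delta>" by simp
    show ?case
    proof (cases "n \<in> II")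
      case False
      then show ?thesis using d pmf_Q_notin[OF d False] by (simp add: pmf_Pidx pf_def C_def)
    next
      case True
      have b1: "c (Suc n) \<le> H \<delta> (Suc n) \<and> H \<delta> (Suc n) \<le> c (Suc n) + (2 * real (Suc n) + 2) * (4 * \<delta>)"
        using True by (intro H_bounds[OF d]) (auto simp: II_def intro: enat_Suc_le)
      have b2: "c n \<le> H \<delta> n \<and> H \<delta> n \<le> c n + (2 * real n + 2) * (4 * \<delta>)"
        using True by (intro H_bounds[OF d]) (auto simp: II_def intro: order_trans)
      have "pmf Pidx n = c (Suc n) - c n" by (simp add: c_Suc pmf_Pidx)
      then show ?thesis using b1 b2 pmf_Q[OF d True] unfolding C_def by (simp add: abs_le_iff algebra_simps)
    qed
  qed
qed

end


lemma pmf_split: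
  fixes R :: "nat pmf" and g :: "nat \<Rightarrow> real"
  assumes bnd: "\<And>n. \<bar>g n\<bar> \<le> B"
  shows "\<bar>measure_pmf.expectation R g - (\<Sum>n\<le>M. g n * pmf R n)\<bar> \<le> B * (1 - measure_pmf.prob R {..M})"
proof -
  define g1 where "g1 n = (if n \<le> M then g n else 0)" for n
  define g2 where "g2 n = (if n \<le> M then 0 else g n)" for n
  have int: "integrable (measure_pmf R) f" if "\<And>n. \<bar>f n\<bar> \<le> B" for f :: "nat \<Rightarrow> real"
    by (rule measure_pmf.integrable_const_bound[where B=B]) (use that in auto)
  have b1: "\<bar>g1 n\<bar> \<le> B" "\<bar>g2 n\<bar> \<le> B" for n
    using bnd[of n] bnd[of 0] by (auto simp: g1_def g2_def)
  have "measure_pmf.expectation R g = measure_pmf.expectation R g1 + measure_pmf.expectation R g2"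
  proof -
    have "g = (\<lambda>n. g1 n + g2 n)" by (auto simp: g1_def g2_def)
    then show ?thesis using int[OF b1(1)] int[OF b1(2)] by (simp add: Bochner_Integration.integral_add)
  qed
  moreover have "measure_pmf.expectation R g1 = (\<Sum>n\<le>M. g1 n * pmf R n)"
    by (rule integral_measure_pmf_real) (auto simp: g1_def split: if_splits)
  moreover have "(\<Sum>n\<le>M. g1 n * pmf R n) = (\<Sum>n\<le>M. g n * pmf R n)"
    by (intro sum.cong) (auto simp: g1_def)
  moreover have "\<bar>measure_pmf.expectation R g2\<bar> \<le> B * (1 - measure_pmf.prob R {..M})"
  proof -
    define A where "A = UNIV - {..M}"
    have mA: "measure_pmf.prob R A = 1 - measure_pmf.prob R {..M}"
      unfolding A_def using measure_pmf.prob_compl[of "{..M}" R] by simp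
    have iA: "measure_pmf.expectation R (\<lambda>n. B * indicator A n) = B * measure_pmf.prob R A"
      by simp
    have B0: "0 \<le> B" using bnd[of 0] by simp
    have lowb: "- B \<le> g n" for n using bnd[of n] unfolding abs_le_iff by linarith
    have intA: "integrable (measure_pmf R) (\<lambda>n. B * indicator A n)"
      by (rule int) (use B0 in \<open>auto simp: indicator_def\<close>)
    have "measure_pmf.expectation R g2 \<le> measure_pmf.expectation R (\<lambda>n. B * indicator A n)"
      by (rule integral_mono[OF int[OF b1(2)] intA]) (auto simp: g2_def A_def indicator_def intro: abs_le_D1[OF bnd])
    moreover have "measure_pmf.expectation R (\<lambda>n. - (B * indicator A n)) \<le> measure_pmf.expectation R g2"
      by (rule integral_mono[OF _ int[OF b1(2)]]) (use intA lowb in \<open>auto simp: g2_def A_def indicator_def\<close>)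
    ultimately show ?thesis using iA mA by (simp add: abs_le_iff)
  qed
  ultimately show ?thesis by simp
qed

lemma pmf_weak_conv:
  fixes Q :: "'i \<Rightarrow> nat pmf" and P :: "nat pmf" and g :: "nat \<Rightarrow> real"
  assumes conv: "\<And>n. ((\<lambda>t. pmf (Q t) n) \<longlongrightarrow> pmf P n) F"
    and cdf: "\<forall>\<^sub>F t in F. \<forall>M. measure_pmf.prob P {..M} \<le> measure_pmf.prob (Q t) {..M}"
    and bnd: "\<And>n. \<bar>g n\<bar> \<le> B"
  shows "((\<lambda>t. measure_pmf.expectation (Q t) g) \<longlongrightarrow> measure_pmf.expectation P g) F"
proof (rule tendstoI)
  fix \<epsilon> :: real assume e: "0 < \<epsilon>"
  have B0: "0 \<le> B" using bnd[of 0] by simp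
  define e where "e = \<epsilon> / (4 * (B + 1))"
  have e0: "0 < e" using e B0 by (simp add: e_def)
  have Be: "B * e < \<epsilon> / 4"
  proof -
    have "(B + 1) * e = \<epsilon> / 4"
    proof -
      have "B + 1 \<noteq> 0" using B0 by simp
      then show ?thesis unfolding e_def by (simp add: field_simps)
    qed
    moreover have "B * e < (B + 1) * e" using e0 by simp
    ultimately show ?thesis by simp
  qed
  have "(\<lambda>M. measure_pmf.prob P {..M}) \<longlonglongrightarrow> measure_pmf.prob P (\<Union>M. {..M})"
    by (intro measure_pmf.finite_Lim_measure_incseq) (auto simp: incseq_def)
  moreover have "(\<Union>M. {..M::nat}) = UNIV" by auto
  ultimately have "(\<lambda>M. measure_pmf.prob P {..M}) \<longlonglongrightarrow> 1" by simp
  then have "\<forall>\<^sub>F M in sequentially. 1 - e < measure_pmf.prob P {..M}"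
    using e0 by (intro order_tendstoD) auto
  then obtain M where M: "1 - e < measure_pmf.prob P {..M}"
    by (auto simp: eventually_sequentially)
  have fs: "((\<lambda>t. \<Sum>n\<le>M. g n * pmf (Q t) n) \<longlongrightarrow> (\<Sum>n\<le>M. g n * pmf P n)) F"
    by (intro tendsto_sum tendsto_mult tendsto_const conv)
  then have "\<forall>\<^sub>F t in F. dist (\<Sum>n\<le>M. g n * pmf (Q t) n) (\<Sum>n\<le>M. g n * pmf P n) < \<epsilon> / 2"
    using e by (intro tendstoD) auto
  with cdf show "\<forall>\<^sub>F t in F. dist (measure_pmf.expectation (Q t) g) (measure_pmf.expectation P g) < \<epsilon>"
  proof eventually_elim
    case (elim t)
    have s1: "\<bar>measure_pmf.expectation (Q t) g - (\<Sum>n\<le>M. g n * pmf (Q t) n)\<bar> \<le> B * (1 - measure_pmf.prob (Q t) {..M})"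
      by (rule pmf_split[OF bnd])
    have s2: "\<bar>measure_pmf.expectation P g - (\<Sum>n\<le>M. g n * pmf P n)\<bar> \<le> B * (1 - measure_pmf.prob P {..M})"
      by (rule pmf_split[OF bnd])
    define EQ where "EQ = measure_pmf.expectation (Q t) g"
    define EP where "EP = measure_pmf.expectation P g"
    define SQ where "SQ = (\<Sum>n\<le>M. g n * pmf (Q t) n)"
    define SP where "SP = (\<Sum>n\<le>M. g n * pmf P n)"
    have "B * (1 - measure_pmf.prob (Q t) {..M}) \<le> B * (1 - measure_pmf.prob P {..M})"
      using elim(1) B0 by (intro mult_left_mono) auto
    moreover have "B * (1 - measure_pmf.prob P {..M}) \<le> B * e"
      using M B0 by (intro mult_left_mono) auto
    ultimately have "B * (1 - measure_pmf.prob (Q t) {..M}) \<le> B * e" "B * (1 - measure_pmf.prob P {..M}) \<le> B * e"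
      by linarith+
    then have t1: "\<bar>EQ - SQ\<bar> \<le> B * e" and t2: "\<bar>EP - SP\<bar> \<le> B * e"
      using s1 s2 unfolding EQ_def EP_def SQ_def SP_def by linarith+
    have t3: "\<bar>SQ - SP\<bar> < \<epsilon> / 2" using elim(2) unfolding SQ_def SP_def dist_real_def .
    have "\<bar>EQ - EP\<bar> < \<epsilon>"
      using t1 t2 t3 Be unfolding abs_le_iff abs_less_iff by linarith
    then show ?case unfolding dist_real_def EQ_def EP_def .
  qed
qed



context lsetup
begin

lemma v_inj: "inj_on v II"
  unfolding II_def by (rule strict_mono_on_imp_inj_on[OF vmono])

lemma distr_eq:
  fixes M :: "'a measure" and X :: "'a \<Rightarrow> real"
  assumes P: "prob_space M" and Xm: "X \<in> borel_measurable M"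
    and pX: "\<And>n. n \<in> II \<Longrightarrow> measure M {\<omega> \<in> space M. X \<omega> = v n} = p n"
  shows "distr M borel X = distr (measure_pmf Pidx) borel v"
proof (rule measure_eqI)
  interpret prob_space M by (rule P)
  show "sets (distr M borel X) = sets (distr (measure_pmf Pidx) borel v)" by simp
  fix A assume "A \<in> sets (distr M borel X)"
  then have A: "A \<in> sets borel" by simp
  define E where "E n = {\<omega> \<in> space M. X \<omega> = v n}" for n
  have Es: "E n \<in> sets M" for n unfolding E_def using Xm by measurable
  have disj: "disjoint_family_on E II"
    using v_inj unfolding disjoint_family_on_def E_def inj_on_def by auto
  have cII: "countable S" for S :: "nat set" by (rule countableI_type)
  have eE: "emeasure M (E n) = ennreal (p n)" if "n \<in> II" for n
    using pX[OF that] by (simp add: emeasure_eq_measure E_def)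
  have sumS: "emeasure M (\<Union>(E ` S)) = (\<integral>\<^sup>+n. ennreal (p n) \<partial>count_space S)" if "S \<subseteq> II" for S
  proof -
    have "emeasure M (\<Union>(E ` S)) = (\<integral>\<^sup>+n. emeasure M (E n) \<partial>count_space S)"
      by (rule emeasure_UN_countable) (use Es cII disj that in \<open>auto intro: disjoint_family_on_mono\<close>)
    also have "\<dots> = (\<integral>\<^sup>+n. ennreal (p n) \<partial>count_space S)"
      by (intro nn_integral_cong) (use eE that in \<open>auto\<close>)
    finally show ?thesis .
  qed
  have "(\<integral>\<^sup>+n. ennreal (p n) \<partial>count_space II) = (\<integral>\<^sup>+n. ennreal (pf n) \<partial>count_space UNIV)"
    by (subst nn_integral_count_space_indicator) (auto simp: pf_def intro!: nn_integral_cong split: split_indicator)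
  then have "emeasure M (\<Union>(E ` II)) = 1" using sumS[of II] pf_nn by simp
  then have "prob (\<Union>(E ` II)) = 1" by (simp add: emeasure_eq_measure)
  then have AEV: "AE \<omega> in M. \<omega> \<in> \<Union>(E ` II)"
    using Es by (subst AE_in_set_eq_1) (auto intro!: sets.countable_UN'' simp: cII)
  define S where "S = II \<inter> v -` A"
  have "emeasure (distr M borel X) A = emeasure M (X -` A \<inter> space M)"
    using A Xm by (simp add: emeasure_distr)
  also have "\<dots> = emeasure M (\<Union>(E ` S))"
  proof (rule emeasure_eq_AE)
    show "AE \<omega> in M. (\<omega> \<in> X -` A \<inter> space M) = (\<omega> \<in> \<Union>(E ` S))"
      using AEV
    proof eventually_elim
      case (elim \<omega>)
      then obtain n where n: "n \<in> II" "\<omega> \<in> E n" by auto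
      have "\<omega> \<in> \<Union>(E ` S) \<longleftrightarrow> n \<in> S"
      proof
        assume "\<omega> \<in> \<Union>(E ` S)"
        then obtain m where "m \<in> S" "\<omega> \<in> E m" by auto
        then have "v m = v n" "m \<in> II" using n by (auto simp: E_def S_def)
        then have "m = n" using v_inj n(1) by (auto simp: inj_on_def)
        then show "n \<in> S" using \<open>m \<in> S\<close> by simp
      qed (use n in auto)
      then show ?case using n by (auto simp: E_def S_def)
    qed
    show "X -` A \<inter> space M \<in> sets M" using A Xm by measurable
    show "\<Union>(E ` S) \<in> sets M" using Es by (auto intro!: sets.countable_UN'' simp: cII)
  qed
  also have "\<dots> = (\<integral>\<^sup>+n. ennreal (p n) \<partial>count_space S)" by (rule sumS) (auto simp: S_def)
  also have "\<dots> = (\<integral>\<^sup>+n. ennreal (pmf Pidx n) \<partial>count_space (v -` A))"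
    by (simp add: nn_integral_count_space_indicator pmf_Pidx S_def pf_def)
       (auto intro!: nn_integral_cong split: split_indicator)
  also have "\<dots> = emeasure (measure_pmf Pidx) (v -` A)" by (rule nn_integral_pmf)
  also have "\<dots> = emeasure (distr (measure_pmf Pidx) borel v) A"
    using A by (simp add: emeasure_distr)
  finally show "emeasure (distr M borel X) A = emeasure (distr (measure_pmf Pidx) borel v) A" .
qed

end


theorem lemma6p1:
  fixes M :: "'a measure" and X :: "'a \<Rightarrow> real"
    and N :: enat and v :: "nat \<Rightarrow> real" and p :: "nat \<Rightarrow> real"
  assumes "prob_space M"
    and "X \<in> borel_measurable M"
    and "N \<ge> 1"
    and "strict_mono_on {n. 1 \<le> n \<and> enat n \<le> N} v"
    and "\<And>n. 1 \<le> n \<Longrightarrow> enat n \<le> N \<Longrightarrow> 0 < p n \<and> p n < 1"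
    and "(p has_sum 1) {n. 1 \<le> n \<and> enat n \<le> N}"
    and "\<And>n. 1 \<le> n \<Longrightarrow> enat n \<le> N \<Longrightarrow> measure M {\<omega> \<in> space M. X \<omega> = v n} = p n"
  shows "\<exists>(q :: real \<Rightarrow> real pmf) (a :: real \<Rightarrow> nat \<Rightarrow> ereal).
    (\<forall>\<delta>>0.
       set_pmf (q \<delta>) \<subseteq> v ` {n. 1 \<le> n \<and> enat n \<le> N}
     \<and> (\<forall>n. 1 \<le> n \<and> enat n \<le> N + 1 \<longrightarrow> a \<delta> n \<in> dZ \<delta> \<union> {-\<infinity>, \<infinity>})
     \<and> strict_mono_on {n. 1 \<le> n \<and> enat n \<le> N + 1} (a \<delta>)
     \<and> a \<delta> 1 = -\<infinity>
     \<and> (N \<noteq> \<infinity> \<longrightarrow> a \<delta> (the_enat N + 1) = \<infinity>)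
     \<and> (\<Union>n\<in>{n. 1 \<le> n \<and> enat n \<le> N}. {x \<in> dZ \<delta> \<union> {-\<infinity>}. a \<delta> n \<le> x \<and> x < a \<delta> (Suc n)})
         = dZ \<delta> \<union> {-\<infinity>}
     \<and> (\<forall>n. 1 \<le> n \<and> enat n \<le> N \<longrightarrow>
          pmf (q \<delta>) (v n) =
            measure_pmf.prob (Z1_law \<delta>) {x. a \<delta> n \<le> ereal x \<and> ereal x < a \<delta> (Suc n)})
     \<and> (\<forall>n. 1 \<le> n \<and> enat n \<le> N \<longrightarrow>
          (a \<delta> n + a \<delta> (Suc n) - ereal \<delta>) / 2 \<notin> dZ \<delta>))
    \<and> conv_law (\<lambda>\<delta>. measure_pmf (q \<delta>)) (distr M borel X) (at_right 0)"
proof -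
  note assms' = assms
  define II0 where "II0 = {n. 1 \<le> n \<and> enat n \<le> N}"
  have N2: "N \<ge> 2"
  proof (rule ccontr)
    assume "\<not> N \<ge> 2"
    then have "N = 1" using assms(3)
      by (cases N) (auto simp: one_enat_def numeral_eq_enat)
    then have I1: "{n. 1 \<le> n \<and> enat n \<le> N} = {1}" by (auto simp: one_enat_def)
    have "(p has_sum p 1) {1::nat}" using has_sum_finite[of "{1::nat}" p] by simp
    then have "p 1 = 1" using assms(6) I1 has_sum_unique by metis
    moreover have "p 1 < 1" using assms(5)[of 1] \<open>N = 1\<close> by (simp add: one_enat_def)
    ultimately show False by simp
  qed
  interpret L: lsetup N v p
    by unfold_locales (use N2 assms in auto)
  have IIeq: "L.II = {n. 1 \<le> n \<and> enat n \<le> N}" by (simp add: L.II_def)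
  define q where "q \<delta> = map_pmf (\<lambda>x. v (L.phi \<delta> x)) (Z1_law \<delta>)" for \<delta>
  have qQ: "q \<delta> = map_pmf v (L.Q \<delta>)" for \<delta>
    by (simp add: q_def L.Q_def map_pmf_comp)
  show ?thesis
  proof (intro exI[of _ q] exI[of _ L.a] conjI allI impI)
    fix \<delta> :: real assume d: "0 < \<delta>"
    show "set_pmf (q \<delta>) \<subseteq> v ` {n. 1 \<le> n \<and> enat n \<le> N}"
      using L.phi[OF d] by (auto simp: q_def IIeq)
    {
      fix n
      have "ereal (2 * \<delta> * real_of_int (L.K \<delta> n)) = ereal (\<delta> * real_of_int (2 * L.K \<delta> n))" by simp
      moreover have "ereal (\<delta> * real_of_int (2 * L.K \<delta> n)) \<in> dZ \<delta>" unfolding dZ_def by blast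
      ultimately have "ereal (2 * \<delta> * real_of_int (L.K \<delta> n)) \<in> dZ \<delta>" by metis
      then show "L.a \<delta> n \<in> dZ \<delta> \<union> {- \<infinity>, \<infinity>}"
        unfolding L.a_def by auto
    }
    show "strict_mono_on {n. 1 \<le> n \<and> enat n \<le> N + 1} (L.a \<delta>)" by (rule L.a_strict[OF d])
    show "L.a \<delta> 1 = - \<infinity>" by (rule L.a_1)
    show "N \<noteq> \<infinity> \<Longrightarrow> L.a \<delta> (the_enat N + 1) = \<infinity>" by (rule L.a_last)
    show "(\<Union>n\<in>{n. 1 \<le> n \<and> enat n \<le> N}. {x \<in> dZ \<delta> \<union> {- \<infinity>}. L.a \<delta> n \<le> x \<and> x < L.a \<delta> (Suc n)}) = dZ \<delta> \<union> {- \<infinity>}"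
    proof
      show "dZ \<delta> \<union> {- \<infinity>} \<subseteq> (\<Union>n\<in>{n. 1 \<le> n \<and> enat n \<le> N}. {x \<in> dZ \<delta> \<union> {- \<infinity>}. L.a \<delta> n \<le> x \<and> x < L.a \<delta> (Suc n)})"
      proof
        fix x assume x: "x \<in> dZ \<delta> \<union> {- \<infinity>}"
        show "x \<in> (\<Union>n\<in>{n. 1 \<le> n \<and> enat n \<le> N}. {x \<in> dZ \<delta> \<union> {- \<infinity>}. L.a \<delta> n \<le> x \<and> x < L.a \<delta> (Suc n)})"
        proof (cases "x = - \<infinity>")
          case True
          have "L.a \<delta> 2 = ereal (2 * \<delta> * real_of_int (L.K \<delta> 2))" by (rule L.a_fin) (auto intro: L.two_II)
          then have "x < L.a \<delta> (Suc 1)" using True by (simp add: numeral_2_eq_2)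
          then show ?thesis using x True L.one_II L.a_1[of \<delta>] by (auto simp: IIeq)
        next
          case False
          then obtain r where r: "x = ereal r" using x by (auto simp: dZ_def)
          obtain n where "n \<in> L.II" "L.a \<delta> n \<le> ereal r" "ereal r < L.a \<delta> (Suc n)"
            using L.partition_ex[OF d] by blast
          then show ?thesis using x r by (auto simp: IIeq)
        qed
      qed
    qed auto
    {
      fix n assume "1 \<le> n \<and> enat n \<le> N"
      then have n: "n \<in> L.II" by (simp add: IIeq)
      have "(\<lambda>x. v (L.phi \<delta> x)) -` {v n} = L.phi \<delta> -` {n}"
        using L.phi[OF d] n L.v_inj by (auto simp: inj_on_def)
      then have "pmf (q \<delta>) (v n) = pmf (L.Q \<delta>) n"
        by (simp add: q_def L.Q_def pmf_map)
      then show "pmf (q \<delta>) (v n) = measure_pmf.prob (Z1_law \<delta>) {x. L.a \<delta> n \<le> ereal x \<and> ereal x < L.a \<delta> (Suc n)}"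
        using L.pmf_Q_interval[OF d n] by simp
    }
    {
      fix n assume "1 \<le> n \<and> enat n \<le> N"
      then have n: "n \<in> L.II" by (simp add: IIeq)
      show "(L.a \<delta> n + L.a \<delta> (Suc n) - ereal \<delta>) / 2 \<notin> dZ \<delta>"
      proof (cases "n = 1")
        case True
        have "L.a \<delta> 2 = ereal (2 * \<delta> * real_of_int (L.K \<delta> 2))" by (rule L.a_fin) (auto intro: L.two_II)
        moreover have "L.a \<delta> (Suc 0) = - \<infinity>" by (simp add: L.a_def)
        ultimately show ?thesis using True by (simp add: numeral_2_eq_2 dZ_def)
      next
        case False
        then have n2: "2 \<le> n" using n by (simp add: IIeq)
        have an: "L.a \<delta> n = ereal (2 * \<delta> * real_of_int (L.K \<delta> n))" by (rule L.a_fin[OF n2 n])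
        show ?thesis
        proof (cases "Suc n \<in> L.II")
          case True
          have an1: "L.a \<delta> (Suc n) = ereal (2 * \<delta> * real_of_int (L.K \<delta> (Suc n)))"
            by (rule L.a_fin) (use n2 True in auto)
          show ?thesis
          proof
            assume "(L.a \<delta> n + L.a \<delta> (Suc n) - ereal \<delta>) / 2 \<in> dZ \<delta>"
            then obtain k where "ereal ((2 * \<delta> * real_of_int (L.K \<delta> n) + 2 * \<delta> * real_of_int (L.K \<delta> (Suc n)) - \<delta>) / 2) = ereal (\<delta> * real_of_int k)"
              unfolding an an1 dZ_def by auto
            then have "(2 * \<delta> * real_of_int (L.K \<delta> n) + 2 * \<delta> * real_of_int (L.K \<delta> (Suc n)) - \<delta>) / 2 = \<delta> * real_of_int k"
              by simp
            then have "\<delta> * (2 * real_of_int (L.K \<delta> n + L.K \<delta> (Suc n) - k)) = \<delta> * 1"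
              by (simp add: algebra_simps)
            then have "2 * real_of_int (L.K \<delta> n + L.K \<delta> (Suc n) - k) = 1" using d by simp
            then have "2 * (L.K \<delta> n + L.K \<delta> (Suc n) - k) = 1" by linarith
            then show False by presburger
          qed
        next
          case False
          then have "\<not> enat (Suc n) \<le> N" by (simp add: IIeq)
          then have "L.a \<delta> (Suc n) = \<infinity>" using n2 by (simp add: L.a_def)
          then show ?thesis using an by (simp add: dZ_def)
        qed
      qed
    }
  next
    show "conv_law (\<lambda>\<delta>. measure_pmf (q \<delta>)) (distr M borel X) (at_right 0)"
      unfolding conv_law_def
    proof (intro allI impI)
      fix f :: "real \<Rightarrow> real" assume f: "continuous_on UNIV f \<and> bounded (range f)"
      then obtain B where B: "\<And>x. \<bar>f x\<bar> \<le> B" by (auto simp: bounded_iff)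
      have fm: "f \<in> borel_measurable borel" using f by (intro borel_measurable_continuous_onI) auto
      have "distr M borel X = distr (measure_pmf L.Pidx) borel v"
        by (rule L.distr_eq) (use assms in \<open>auto simp: IIeq\<close>)
      then have rhs: "integral\<^sup>L (distr M borel X) f = measure_pmf.expectation L.Pidx (\<lambda>n. f (v n))"
        using fm by (simp add: integral_distr)
      have lhs: "integral\<^sup>L (measure_pmf (q \<delta>)) f = measure_pmf.expectation (L.Q \<delta>) (\<lambda>n. f (v n))" for \<delta>
        by (simp add: qQ)
      have "((\<lambda>\<delta>. measure_pmf.expectation (L.Q \<delta>) (\<lambda>n. f (v n))) \<longlongrightarrow> measure_pmf.expectation L.Pidx (\<lambda>n. f (v n))) (at_right 0)"
      proof (rule pmf_weak_conv)
        show "\<And>n. ((\<lambda>t. pmf (L.Q t) n) \<longlongrightarrow> pmf L.Pidx n) (at_right 0)" by (rule L.Q_conv)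
        show "\<forall>\<^sub>F t in at_right 0. \<forall>M. measure_pmf.prob L.Pidx {..M} \<le> measure_pmf.prob (L.Q t) {..M}"
          using eventually_at_right_less[of "0::real"] by eventually_elim (auto intro: L.Q_cdf)
        show "\<And>n. \<bar>f (v n)\<bar> \<le> B" by (rule B)
      qed
      then show "((\<lambda>t. integral\<^sup>L (measure_pmf (q t)) f) \<longlongrightarrow> integral\<^sup>L (distr M borel X) f) (at_right 0)"
        unfolding lhs rhs .
    qed
  qed
qed


end
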